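(* Let $\gamma(p)$ be the payoff of the greedy strategy $\sigma_*$ from initial belief $p$, and let $d(p)=\gamma(p)-\delta\gamma(\phi(p))$. Assume that $\gamma$ is concave on $\Delta(\Omega)$ and that $d(p)\ge0$ for all $p\in J$. Then $\sigma_*$ is optimal at every initial belief $p_1\in\Delta(\Omega)$.
   Context: Let $\Omega$ be a finite set, identify each $\omega$ with a unit vector of $\mathbb{R}^\Omega$ and $\Delta(\Omega)$ with the unit simplex. Let $M$ be the transition matrix of an irreducible Markov chain on $\Omega$, $r:\Omega\to\mathbb{R}$, $\delta\in[0,1)$, $\phi(q)=qM$. $I=\{p:\sum_\omega p(\omega)r(\omega)\ge0\}$, $J=\Delta(\Omega)\setminus I$. $\mathcal{S}(p)$ is the set of Borel probability measures on $\Delta(\Omega)$ with mean $p$, $\mu_p$ the Dirac mass at $p$. Decision problem from $p_1$: at each stage $n$, at belief $p_n$, the advisor chooses $\mu\in\mathcal{S}(p_n)$ (possibly depending on the past), a posterior $q_n\sim\mu$ is drawn, the stage payoff is $\mathbf{1}_{\{q_n\in I\}}$, and $p_{n+1}=\phi(q_n)$. A strategy's payoff is $\mathbb{E}[(1-\delta)\sum_{n\ge1}\delta^{n-1}\mathbf{1}_{\{q_n\in I\}}]$; $V_\delta(p_1)$ is the maximal payoff; optimal means achieving it. The greedy strategy $\sigma_*$: at $p\in I$ choose $\mu_p$; at $p\in J$ choose a two-point splitting $p=a_Iq_I+a_Jq_J$ (posterior $q_I$ w.p. $a_I$, $q_J$ w.p. $a_J$) maximizing $a_I$ subject to $q_I\in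 I$, $q_J\in\Delta(\Omega)$, $a_I+a_J=1$, $a_I,a_J\ge0$. *)

theory Defs
  imports "HOL-Probability.Probability"
begin

text \<open>States: a finite type 'n. Beliefs: vectors in real^'n. The transition matrix M has
  rows M$i, i.e. M$i$j is the probability of moving from i to j; phi(q) = q M.\<close>

definition prob_simplex :: "(real^'n::finite) set" where
  "prob_simplex = {p. (\<forall>i. 0 \<le> p$i) \<and> (\<Sum>i\<in>UNIV. p$i) = 1}"

definition stochastic_matrix :: "real^'n^'n::finite \<Rightarrow> bool" where
  "stochastic_matrix M \<longleftrightarrow> (\<forall>i j. 0 \<le> M$i$j) \<and> (\<forall>i. (\<Sum>j\<in>UNIV. M$i$j) = 1)"

definition irreducible_matrix :: "real^'n^'n::finite \<Rightarrow> bool" where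
  "irreducible_matrix M \<longleftrightarrow> (\<forall>i j. (i, j) \<in> {(a, b). 0 < M$a$b}\<^sup>*)"

definition phi :: "real^'n^'n::finite \<Rightarrow> real^'n \<Rightarrow> real^'n" where
  "phi M q = q v* M"

definition Iset :: "real^'n::finite \<Rightarrow> (real^'n) set" where
  "Iset r = {p \<in> prob_simplex. 0 \<le> (\<Sum>w\<in>UNIV. p$w * r$w)}"

definition Jset :: "real^'n::finite \<Rightarrow> (real^'n) set" where
  "Jset r = prob_simplex - Iset r"

definition splittings :: "real^'n::finite \<Rightarrow> (real^'n) measure set" where
  "splittings p = {\<mu>. prob_space \<mu> \<and> sets \<mu> = sets borel \<and> (AE x in \<mu>. x \<in> prob_simplex)
      \<and> integrable \<mu> (\<lambda>x. x) \<and> (\<integral>x. x \<partial>\<mu>) = p}"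

text \<open>A (behavioural) strategy maps the history of realised posteriors q_1..q_(n-1) to the
  splitting chosen at stage n. The current belief after history h.\<close>
definition belief :: "real^'n^'n::finite \<Rightarrow> real^'n \<Rightarrow> (real^'n) list \<Rightarrow> real^'n" where
  "belief M p1 h = (if h = [] then p1 else phi M (last h))"

definition strategy :: "real^'n^'n::finite \<Rightarrow> real^'n \<Rightarrow> ((real^'n) list \<Rightarrow> (real^'n) measure) \<Rightarrow> bool" where
  "strategy M p1 \<sigma> \<longleftrightarrow> (\<forall>h. set h \<subseteq> prob_simplex \<longrightarrow> \<sigma> h \<in> splittings (belief M p1 h))"

fun stage_payoff :: "real^'n::finite \<Rightarrow> real \<Rightarrow> ((real^'n) list \<Rightarrow> (real^'n) measure)
    \<Rightarrow> nat \<Rightarrow> (real^'n) list \<Rightarrow> ennreal" where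
  "stage_payoff r \<delta> \<sigma> 0 h = 0"
| "stage_payoff r \<delta> \<sigma> (Suc n) h =
     (\<integral>\<^sup>+ q. (ennreal ((1 - \<delta>) * indicator (Iset r) q) + ennreal \<delta> * stage_payoff r \<delta> \<sigma> n (h @ [q])) \<partial>(\<sigma> h))"

text \<open>Payoff E[(1-delta) sum_n delta^(n-1) 1{q_n in I}] (monotone limit of the truncations).\<close>
definition payoff :: "real^'n::finite \<Rightarrow> real \<Rightarrow> ((real^'n) list \<Rightarrow> (real^'n) measure) \<Rightarrow> ennreal" where
  "payoff r \<delta> \<sigma> = (SUP n. stage_payoff r \<delta> \<sigma> n [])"

definition value_fn :: "real^'n^'n::finite \<Rightarrow> real^'n \<Rightarrow> real \<Rightarrow> real^'n \<Rightarrow> ennreal" where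
  "value_fn M r \<delta> p1 = (SUP \<sigma> \<in> {\<sigma>. strategy M p1 \<sigma>}. payoff r \<delta> \<sigma>)"

definition optimal :: "real^'n^'n::finite \<Rightarrow> real^'n \<Rightarrow> real \<Rightarrow> real^'n
    \<Rightarrow> ((real^'n) list \<Rightarrow> (real^'n) measure) \<Rightarrow> bool" where
  "optimal M r \<delta> p1 \<sigma> \<longleftrightarrow> strategy M p1 \<sigma> \<and> payoff r \<delta> \<sigma> = value_fn M r \<delta> p1"

definition two_point :: "real \<Rightarrow> real^'n::finite \<Rightarrow> real^'n \<Rightarrow> (real^'n) measure" where
  "two_point a qI qJ = distr (measure_pmf (bernoulli_pmf a)) borel (\<lambda>b. if b then qI else qJ)"

definition feasible_split :: "real^'n::finite \<Rightarrow> real^'n \<Rightarrow> real \<Rightarrow> real^'n \<Rightarrow> real \<Rightarrow> real^'n \<Rightarrow> bool" where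
  "feasible_split r p aI qI aJ qJ \<longleftrightarrow> qI \<in> Iset r \<and> qJ \<in> prob_simplex \<and> 0 \<le> aI \<and> 0 \<le> aJ
      \<and> aI + aJ = 1 \<and> p = aI *\<^sub>R qI + aJ *\<^sub>R qJ"

definition greedy_split :: "real^'n::finite \<Rightarrow> real^'n \<Rightarrow> real \<Rightarrow> real^'n \<Rightarrow> real \<Rightarrow> real^'n \<Rightarrow> bool" where
  "greedy_split r p aI qI aJ qJ \<longleftrightarrow> feasible_split r p aI qI aJ qJ
      \<and> (\<forall>aI' qI' aJ' qJ'. feasible_split r p aI' qI' aJ' qJ' \<longrightarrow> aI' \<le> aI)"

definition greedy_selection :: "real^'n::finite \<Rightarrow> (real^'n \<Rightarrow> (real^'n) measure) \<Rightarrow> bool" where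
  "greedy_selection r G \<longleftrightarrow> (\<forall>p \<in> prob_simplex.
      (p \<in> Iset r \<longrightarrow> G p = return borel p) \<and>
      (p \<in> Jset r \<longrightarrow> (\<exists>aI qI aJ qJ. greedy_split r p aI qI aJ qJ \<and> G p = two_point aI qI qJ)))"

definition greedy_strategy :: "real^'n^'n::finite \<Rightarrow> (real^'n \<Rightarrow> (real^'n) measure) \<Rightarrow> real^'n
    \<Rightarrow> ((real^'n) list \<Rightarrow> (real^'n) measure)" where
  "greedy_strategy M G p1 = (\<lambda>h. G (belief M p1 h))"

definition greedy_payoff :: "real^'n^'n::finite \<Rightarrow> real^'n \<Rightarrow> real \<Rightarrow> (real^'n \<Rightarrow> (real^'n) measure)
    \<Rightarrow> real^'n \<Rightarrow> real" where
  "greedy_payoff M r \<delta> G p = enn2real (payoff r \<delta> (greedy_strategy M G p))"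

end

theory Submission
  imports Defs
begin

lemma simplex_sets: "prob_simplex \<in> sets (borel :: (real^'n::finite) measure)"
proof -
  have "prob_simplex = (\<Inter>i. {p::real^'n. 0 \<le> p$i}) \<inter> {p. (\<Sum>i\<in>UNIV. p$i) = 1}"
    unfolding prob_simplex_def by auto
  also have "\<dots> \<in> sets borel" by measurable
  finally show ?thesis .
qed

lemma phi_simplex:
  assumes "stochastic_matrix M" "p \<in> prob_simplex"
  shows "phi M p \<in> prob_simplex"
proof -
  have "(\<Sum>j\<in>UNIV. (\<Sum>i\<in>UNIV. p$i * M$i$j)) = (\<Sum>i\<in>UNIV. p$i * (\<Sum>j\<in>UNIV. M$i$j))"
    by (subst sum.swap) (simp add: sum_distrib_left)
  also have "\<dots> = 1" using assms by (simp add: stochastic_matrix_def prob_simplex_def)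
  finally have s1: "(\<Sum>j\<in>UNIV. (\<Sum>i\<in>UNIV. p$i * M$i$j)) = 1" .
  have nn: "0 \<le> (\<Sum>i\<in>UNIV. p$i * M$i$j)" for j
    using assms by (auto simp: prob_simplex_def stochastic_matrix_def intro!: sum_nonneg)
  show ?thesis
    unfolding phi_def vector_matrix_mult_def prob_simplex_def using s1 nn by simp
qed

lemma belief_simplex:
  assumes "stochastic_matrix M" "p1 \<in> prob_simplex" "set h \<subseteq> prob_simplex"
  shows "belief M p1 h \<in> prob_simplex"
  using assms by (auto simp: belief_def intro!: phi_simplex)

lemma return_split:
  assumes "p \<in> prob_simplex"
  shows "return borel p \<in> splittings p"
proof -
  have "AE x in return borel p. x \<in> prob_simplex"
    using assms simplex_sets by (subst AE_return) (auto simp: pred_def)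
  moreover have "integrable (return borel p) (\<lambda>x. x)"
  proof (rule integrableI_bounded)
    show m: "(\<lambda>x. x) \<in> borel_measurable (return borel p)"
      by (rule measurable_ident_sets) simp
    have "(\<integral>\<^sup>+ x. ennreal (norm x) \<partial>return borel p) = ennreal (norm p)"
      by (rule nn_integral_return) auto
    then show "(\<integral>\<^sup>+ x. ennreal (norm x) \<partial>return borel p) < \<infinity>" by simp
  qed
  moreover have "(\<integral>x. x \<partial>return borel p) = p"
    by (rule integral_return) auto
  moreover have "prob_space (return borel p)" by (rule prob_space_return) simp
  ultimately show ?thesis
    by (simp add: splittings_def)
qed

lemma two_point_split:
  assumes "qI \<in> prob_simplex" "qJ \<in> prob_simplex" "0 \<le> a" "a \<le> 1"
  shows "two_point a qI qJ \<in> splittings (a *\<^sub>R qI + (1 - a) *\<^sub>R qJ)"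
proof -
  let ?f = "\<lambda>b::bool. if b then qI else qJ"
  have mf: "?f \<in> measurable (measure_pmf (bernoulli_pmf a)) borel" by simp
  have ps: "prob_space (two_point a qI qJ)"
    unfolding two_point_def by (rule measure_pmf.prob_space_distr[OF mf])
  have ae: "AE x in two_point a qI qJ. x \<in> prob_simplex"
    unfolding two_point_def using assms simplex_sets
    by (subst AE_distr_iff) (auto simp: pred_def)
  have int: "integrable (two_point a qI qJ) (\<lambda>x. x)"
    unfolding two_point_def
    by (subst integrable_distr_eq[OF mf]) (auto intro: integrable_measure_pmf_finite)
  have "(\<integral>x. x \<partial>two_point a qI qJ) = (\<integral>b. ?f b \<partial>measure_pmf (bernoulli_pmf a))"
    unfolding two_point_def by (rule integral_distr[OF mf]) simp
  also have "\<dots> = (\<Sum>b\<in>UNIV. pmf (bernoulli_pmf a) b *\<^sub>R ?f b)"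
    by (rule integral_measure_pmf) auto
  also have "\<dots> = a *\<^sub>R qI + (1 - a) *\<^sub>R qJ"
    using assms by (simp add: UNIV_bool)
  moreover have "sets (two_point a qI qJ) = sets borel" by (simp add: two_point_def)
  ultimately show ?thesis using ps ae int
    by (simp add: splittings_def)
qed

lemma G_split:
  assumes "greedy_selection r G" "p \<in> prob_simplex"
  shows "G p \<in> splittings p"
proof (cases "p \<in> Iset r")
  case True
  then show ?thesis using assms return_split by (auto simp: greedy_selection_def)
next
  case False
  then have "p \<in> Jset r" using assms by (simp add: Jset_def)
  then obtain aI qI aJ qJ where gs: "greedy_split r p aI qI aJ qJ" and Gp: "G p = two_point aI qI qJ"
    using assms by (auto simp: greedy_selection_def)
  then have f: "feasible_split r p aI qI aJ qJ" by (simp add: greedy_split_def)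
  then have "qI \<in> prob_simplex" by (auto simp: feasible_split_def Iset_def)
  moreover have "aJ = 1 - aI" using f by (simp add: feasible_split_def)
  ultimately show ?thesis using f two_point_split[of qI qJ aI] Gp
    by (auto simp: feasible_split_def)
qed

lemma greedy_is_strategy:
  assumes "stochastic_matrix M" "greedy_selection r G" "p1 \<in> prob_simplex"
  shows "strategy M p1 (greedy_strategy M G p1)"
  using assms by (auto simp: strategy_def greedy_strategy_def intro!: G_split belief_simplex)

lemma stage_shift:
  "stage_payoff r \<delta> \<sigma> n (h0 @ h) = stage_payoff r \<delta> (\<lambda>h'. \<sigma> (h0 @ h')) n h"
  by (induction n arbitrary: h) simp_all

lemma greedy_shift:
  "(\<lambda>h'. greedy_strategy M G p1 ([q] @ h')) = greedy_strategy M G (phi M q)"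
  by (auto simp: greedy_strategy_def belief_def)

lemma stage_bound:
  assumes "strategy M p1 \<sigma>" "0 \<le> \<delta>" "\<delta> \<le> 1"
  shows "set h \<subseteq> prob_simplex \<Longrightarrow> stage_payoff r \<delta> \<sigma> n h \<le> 1"
proof (induction n arbitrary: h)
  case 0
  then show ?case by simp
next
  case (Suc n)
  have sp: "\<sigma> h \<in> splittings (belief M p1 h)" using assms Suc.prems by (auto simp: strategy_def)
  then have ps: "prob_space (\<sigma> h)" and ae: "AE q in \<sigma> h. q \<in> prob_simplex"
    by (auto simp: splittings_def)
  have "stage_payoff r \<delta> \<sigma> (Suc n) h \<le> (\<integral>\<^sup>+ q. 1 \<partial>\<sigma> h)"
    unfolding stage_payoff.simps
  proof (rule nn_integral_mono_AE)
    show "AE q in \<sigma> h. ennreal ((1 - \<delta>) * indicator (Iset r) q) + ennreal \<delta> * stage_payoff r \<delta> \<sigma> n (h @ [q]) \<le> 1"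
      using ae
    proof eventually_elim
      case (elim q)
      have "stage_payoff r \<delta> \<sigma> n (h @ [q]) \<le> 1" using Suc elim by auto
      then have "ennreal \<delta> * stage_payoff r \<delta> \<sigma> n (h @ [q]) \<le> ennreal \<delta> * 1"
        by (rule mult_left_mono) simp
      moreover have "ennreal ((1 - \<delta>) * indicator (Iset r) q) \<le> ennreal (1 - \<delta>)"
        using assms by (intro ennreal_leI) (auto simp: indicator_def)
      ultimately have "ennreal ((1 - \<delta>) * indicator (Iset r) q) + ennreal \<delta> * stage_payoff r \<delta> \<sigma> n (h @ [q])
          \<le> ennreal (1 - \<delta>) + ennreal \<delta>" by (metis add_mono mult.right_neutral)
      also have "\<dots> = ennreal ((1 - \<delta>) + \<delta>)" using assms by (subst ennreal_plus) auto
      also have "\<dots> = 1" by simp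
      finally show ?case .
    qed
  qed
  also have "\<dots> = 1" using ps by (simp add: prob_space.emeasure_space_1)
  finally show ?case .
qed

lemma SUP_Suc_shift:
  fixes f :: "nat \<Rightarrow> ennreal"
  assumes "f 0 = 0"
  shows "(SUP n. f n) = (SUP n. f (Suc n))"
proof (rule antisym)
  show "(SUP n. f n) \<le> (SUP n. f (Suc n))"
  proof (rule SUP_least)
    fix n show "f n \<le> (SUP n. f (Suc n))"
      using assms by (cases n) (auto intro: SUP_upper)
  qed
  show "(SUP n. f (Suc n)) \<le> (SUP n. f n)"
    by (rule SUP_least) (rule SUP_upper, simp)
qed

lemma payoff_bound:
  assumes "strategy M p1 \<sigma>" "0 \<le> \<delta>" "\<delta> \<le> 1"
  shows "payoff r \<delta> \<sigma> \<le> 1"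
  unfolding payoff_def using stage_bound[OF assms] by (auto intro: SUP_least)

lemma greedy_I:
  assumes "stochastic_matrix M" "greedy_selection r G" "0 \<le> \<delta>" "\<delta> \<le> 1" "q \<in> Iset r"
  shows "greedy_payoff M r \<delta> G q = (1 - \<delta>) + \<delta> * greedy_payoff M r \<delta> G (phi M q)"
proof -
  have qs: "q \<in> prob_simplex" using assms by (simp add: Iset_def)
  have Gq: "G q = return borel q" using assms qs by (simp add: greedy_selection_def)
  have ae: "AE x in return borel q. x = q"
    by (subst AE_return) (auto simp: pred_def)
  let ?X = "\<lambda>n. stage_payoff r \<delta> (greedy_strategy M G (phi M q)) n []"
  have step: "stage_payoff r \<delta> (greedy_strategy M G q) (Suc n) [] = ennreal (1 - \<delta>) + ennreal \<delta> * ?X n" for n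
  proof -
    have "stage_payoff r \<delta> (greedy_strategy M G q) (Suc n) [] =
      (\<integral>\<^sup>+ x. ennreal ((1 - \<delta>) * indicator (Iset r) x) + ennreal \<delta> * stage_payoff r \<delta> (greedy_strategy M G q) n ([x] @ []) \<partial>return borel q)"
      by (simp add: greedy_strategy_def belief_def Gq)
    also have "\<dots> = (\<integral>\<^sup>+ x. ennreal (1 - \<delta>) + ennreal \<delta> * ?X n \<partial>return borel q)"
      using ae
    proof (intro nn_integral_cong_AE, eventually_elim)
      case (elim x)
      then show ?case using assms(5)
        by (simp only: stage_shift greedy_shift) (simp add: indicator_def)
    qed
    also have "\<dots> = ennreal (1 - \<delta>) + ennreal \<delta> * ?X n"
      by (simp add: prob_space.emeasure_space_1 prob_space_return)
    finally show ?thesis .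
  qed
  have "payoff r \<delta> (greedy_strategy M G q) = (SUP n. stage_payoff r \<delta> (greedy_strategy M G q) (Suc n) [])"
    unfolding payoff_def by (rule SUP_Suc_shift) simp
  also have "\<dots> = (SUP n. ennreal (1 - \<delta>) + ennreal \<delta> * ?X n)"
    by (simp only: step)
  also have "\<dots> = ennreal (1 - \<delta>) + ennreal \<delta> * payoff r \<delta> (greedy_strategy M G (phi M q))"
    unfolding payoff_def by (simp add: SUP_mult_left_ennreal ennreal_SUP_add_right)
  finally have eq: "payoff r \<delta> (greedy_strategy M G q) = ennreal (1 - \<delta>) + ennreal \<delta> * payoff r \<delta> (greedy_strategy M G (phi M q))" .
  have fin: "payoff r \<delta> (greedy_strategy M G (phi M q)) \<le> 1"
    by (rule payoff_bound[OF greedy_is_strategy[OF assms(1,2) phi_simplex[OF assms(1) qs]]]) (use assms in auto)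
  then have nt: "payoff r \<delta> (greedy_strategy M G (phi M q)) < \<top>"
    using ennreal_one_less_top by (rule le_less_trans)
  then have pe: "payoff r \<delta> (greedy_strategy M G (phi M q)) = ennreal (greedy_payoff M r \<delta> G (phi M q))"
    unfolding greedy_payoff_def by (rule ennreal_enn2real[symmetric])
  have gnn: "0 \<le> greedy_payoff M r \<delta> G (phi M q)" by (simp add: greedy_payoff_def)
  have "payoff r \<delta> (greedy_strategy M G q) = ennreal ((1 - \<delta>) + \<delta> * greedy_payoff M r \<delta> G (phi M q))"
    unfolding eq pe using assms gnn by (simp add: ennreal_mult ennreal_plus)
  then have "greedy_payoff M r \<delta> G q = enn2real (ennreal ((1 - \<delta>) + \<delta> * greedy_payoff M r \<delta> G (phi M q)))"
    by (simp only: greedy_payoff_def)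
  also have "\<dots> = (1 - \<delta>) + \<delta> * greedy_payoff M r \<delta> G (phi M q)"
    using assms gnn by (intro enn2real_ennreal) simp
  finally show ?thesis .
qed

lemma supergrad:
  fixes \<gamma> :: "'a::euclidean_space \<Rightarrow> real"
  assumes cv: "convex F" and cc: "concave_on F \<gamma>" and pF: "p \<in> F" and ep: "\<epsilon> > 0"
    and refl: "\<And>x. x \<in> F \<Longrightarrow> \<exists>e>0. p - e *\<^sub>R (x - p) \<in> F"
  shows "\<exists>g. \<forall>x\<in>F. \<gamma> x \<le> \<gamma> p + \<epsilon> + g \<bullet> (x - p)"
proof -
  define H where "H = {(x, t). x \<in> F \<and> t \<le> \<gamma> x}"
  define z where "z = (p, \<gamma> p + \<epsilon>)"
  have "convex H"
    unfolding convex_def H_def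
  proof (clarsimp)
    fix x t y s :: _ and u v :: real
    assume "x \<in> F" "t \<le> \<gamma> x" "y \<in> F" "s \<le> \<gamma> y" "0 \<le> u" "0 \<le> v" "u + v = 1"
    then show "u *\<^sub>R x + v *\<^sub>R y \<in> F \<and> u * t + v * s \<le> \<gamma> (u *\<^sub>R x + v *\<^sub>R y)"
      using cv cc unfolding convex_def concave_on_iff
      by (smt (verit, best) mult_left_mono)
  qed
  moreover have "H \<noteq> {}" using pF by (auto simp: H_def)
  moreover have "z \<notin> H" using ep by (auto simp: H_def z_def)
  ultimately obtain a b where aff: "z + a \<in> affine hull (insert z H)" and a0: "a \<noteq> 0"
    and az: "a \<bullet> z \<le> b" and aH: "\<And>u. u \<in> H \<Longrightarrow> a \<bullet> u \<ge> b"
    using separating_hyperplane_set_point_inaff[of H z] by blast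
  define a1 where "a1 = fst a"
  define c where "c = snd a"
  have key: "a1 \<bullet> p + c * (\<gamma> p + \<epsilon>) \<le> a1 \<bullet> x + c * t" if "x \<in> F" "t \<le> \<gamma> x" for x t
  proof -
    have "(x, t) \<in> H" using that by (simp add: H_def)
    from aH[OF this] az show ?thesis by (simp add: inner_prod_def a1_def c_def z_def)
  qed
  have "c \<le> 0"
    using key[OF pF, of "\<gamma> p - 1"] ep by (smt (verit) mult_le_cancel_left)
  moreover have "c \<noteq> 0"
  proof
    assume c0: "c = 0"
    have eq: "a1 \<bullet> x = a1 \<bullet> p" if xF: "x \<in> F" for x
    proof -
      have ge: "a1 \<bullet> p \<le> a1 \<bullet> y" if "y \<in> F" for y using key[OF that order_refl] c0 by simp
      obtain e where e: "e > 0" "p - e *\<^sub>R (x - p) \<in> F" using refl[OF xF] by blast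
      have "a1 \<bullet> p \<le> a1 \<bullet> p - e * (a1 \<bullet> (x - p))"
        using ge[OF e(2)] by (simp add: inner_diff_right)
      then have "a1 \<bullet> (x - p) \<le> 0" using e(1) by (simp add: mult_le_0_iff)
      with ge[OF xF] show ?thesis by (simp add: inner_diff_right)
    qed
    define A where "A = {v :: 'a \<times> real. (a1, 0) \<bullet> v = a1 \<bullet> p}"
    have "affine A" unfolding A_def by (rule affine_hyperplane)
    moreover have "insert z H \<subseteq> A"
      using eq by (auto simp: A_def H_def z_def inner_prod_def)
    ultimately have "affine hull (insert z H) \<subseteq> A" by (rule hull_minimal[rotated])
    with aff have "z + a \<in> A" by blast
    then have "a1 \<bullet> (p + a1) = a1 \<bullet> p" by (simp add: A_def z_def inner_prod_def a1_def)
    then have "a1 = 0" by (simp add: inner_add_right)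
    then have "a = 0" using c0 by (simp add: a1_def c_def prod_eq_iff)
    with a0 show False by simp
  qed
  ultimately have cn: "c < 0" by simp
  define g where "g = (- 1 / c) *\<^sub>R a1"
  have "\<gamma> x \<le> \<gamma> p + \<epsilon> + g \<bullet> (x - p)" if "x \<in> F" for x
  proof -
    have k: "a1 \<bullet> p + c * (\<gamma> p + \<epsilon>) \<le> a1 \<bullet> x + c * \<gamma> x" using key[OF that order_refl] .
    have "g \<bullet> (x - p) = (a1 \<bullet> x - a1 \<bullet> p) / (- c)"
      by (simp add: g_def inner_diff_right divide_simps)
    moreover have "\<gamma> x - \<gamma> p - \<epsilon> \<le> (a1 \<bullet> x - a1 \<bullet> p) / (- c)"
    proof -
      have "(\<gamma> x - \<gamma> p - \<epsilon>) * (-c) \<le> a1 \<bullet> x - a1 \<bullet> p" using k by (simp add: algebra_simps)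
      moreover have "0 < -c" using cn by simp
      ultimately show ?thesis by (simp add: pos_le_divide_eq del: minus_divide_right divide_minus_right)
    qed
    ultimately show ?thesis by simp
  qed
  then show ?thesis by blast
qed

lemma comp_integral:
  fixes \<mu> :: "(real^'n::finite) measure"
  assumes "integrable \<mu> (\<lambda>x. x)"
  shows "(\<integral>x. x \<partial>\<mu>) $ i = (\<integral>x. x $ i \<partial>\<mu>)" "integrable \<mu> (\<lambda>x. x $ i)"
proof -
  have "(\<integral>x. axis i 1 \<bullet> x \<partial>\<mu>) = axis i 1 \<bullet> (\<integral>x. x \<partial>\<mu>)"
    using assms by (rule integral_inner_right)
  then show "(\<integral>x. x \<partial>\<mu>) $ i = (\<integral>x. x $ i \<partial>\<mu>)"
    by (simp add: cart_eq_inner_axis inner_commute)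
  have "integrable \<mu> (\<lambda>x. axis i 1 \<bullet> x)" using assms by (rule integrable_inner_right)
  then show "integrable \<mu> (\<lambda>x. x $ i)"
    by (simp add: cart_eq_inner_axis inner_commute)
qed

lemma jensen_simplex:
  fixes \<gamma> :: "real^'n::finite \<Rightarrow> real"
  assumes conc: "concave_on prob_simplex \<gamma>" and nn: "\<forall>x\<in>prob_simplex. 0 \<le> \<gamma> x"
    and mu: "\<mu> \<in> splittings p" and ps: "p \<in> prob_simplex"
  shows "(\<integral>\<^sup>+ x. ennreal (\<gamma> x) \<partial>\<mu>) \<le> ennreal (\<gamma> p)"
proof -
  have P: "prob_space \<mu>" and sets: "sets \<mu> = sets borel" and aeS: "AE x in \<mu>. x \<in> prob_simplex"
    and int: "integrable \<mu> (\<lambda>x. x)" and mean: "(\<integral>x. x \<partial>\<mu>) = p"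
    using mu by (auto simp: splittings_def)
  interpret P: prob_space \<mu> by (rule P)
  define F where "F = {x \<in> prob_simplex. \<forall>i. p$i = 0 \<longrightarrow> x$i = 0}"
  have FS: "F \<subseteq> prob_simplex" by (auto simp: F_def)
  have pF: "p \<in> F" using ps by (simp add: F_def)
  have cvS: "convex (prob_simplex :: (real^'n) set)"
    using conc by (simp add: concave_on_iff)
  have cvF: "convex F"
    using cvS unfolding F_def convex_def by auto
  have ccF: "concave_on F \<gamma>"
    using conc cvF unfolding concave_on_iff using FS by (meson subsetD)
  have aeF: "AE x in \<mu>. x \<in> F"
  proof -
    have "AE x in \<mu>. x $ i = 0" if "p $ i = 0" for i
    proof -
      have "AE x in \<mu>. 0 \<le> x $ i" using aeS by eventually_elim (simp add: prob_simplex_def)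
      moreover have "(\<integral>x. x $ i \<partial>\<mu>) = 0" using comp_integral(1)[OF int, of i] mean that by simp
      ultimately show ?thesis using integral_nonneg_eq_0_iff_AE[OF comp_integral(2)[OF int]] by blast
    qed
    then have "AE x in \<mu>. \<forall>i\<in>{i. p$i = 0}. x $ i = 0"
      by (intro AE_finite_allI) auto
    with aeS show ?thesis by eventually_elim (auto simp: F_def)
  qed
  obtain e0 where e0: "e0 > 0" "\<And>i. 0 < p$i \<Longrightarrow> e0 \<le> p$i"
  proof -
    let ?S = "insert 1 {p$i | i. 0 < p$i}"
    have fin: "finite ?S" by simp
    have "Min ?S > 0" using fin by (subst Min_gr_iff) auto
    moreover have "Min ?S \<le> p$i" if "0 < p$i" for i using fin that by (intro Min_le) auto
    ultimately show ?thesis using that by blast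
  qed
  have refl: "\<exists>e>0. p - e *\<^sub>R (x - p) \<in> F" if xF: "x \<in> F" for x
  proof (intro exI conjI)
    show "e0 > 0" by (rule e0)
    have xi: "0 \<le> x$i" "x$i \<le> 1" for i
    proof -
      show "0 \<le> x$i" using xF by (auto simp: F_def prob_simplex_def)
      have "x$i \<le> (\<Sum>j\<in>UNIV. x$j)"
        using xF by (intro member_le_sum) (auto simp: F_def prob_simplex_def)
      then show "x$i \<le> 1" using xF by (auto simp: F_def prob_simplex_def)
    qed
    have pi0: "0 \<le> p$i" for i using ps by (auto simp: prob_simplex_def)
    have nonneg: "0 \<le> (p - e0 *\<^sub>R (x - p))$i" for i
    proof (cases "p$i = 0")
      case True then show ?thesis using xF by (auto simp: F_def)
    next
      case False
      then have "0 < p$i" using pi0[of i] by simp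
      then have "e0 \<le> p$i" using e0 by blast
      moreover have "e0 * x$i \<le> e0" using xi[of i] e0(1) by (simp add: mult_left_le)
      moreover have "0 \<le> e0 * p$i" using e0(1) pi0[of i] by simp
      ultimately show ?thesis by (simp add: algebra_simps)
    qed
    have "(\<Sum>i\<in>UNIV. (p - e0 *\<^sub>R (x - p))$i) = (1 + e0) * (\<Sum>i\<in>UNIV. p$i) - e0 * (\<Sum>i\<in>UNIV. x$i)"
      by (simp add: sum_subtractf sum_distrib_left algebra_simps sum.distrib)
    also have "\<dots> = 1" using ps xF by (simp add: F_def prob_simplex_def)
    finally show "p - e0 *\<^sub>R (x - p) \<in> F"
      using nonneg xF by (auto simp: F_def prob_simplex_def)
  qed
  show ?thesis
  proof (rule ennreal_le_epsilon)
    fix \<epsilon> :: real assume ep: "0 < \<epsilon>"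
    obtain g where g: "\<And>x. x \<in> F \<Longrightarrow> \<gamma> x \<le> \<gamma> p + \<epsilon> + g \<bullet> (x - p)"
      using supergrad[OF cvF ccF pF ep refl] by blast
    let ?h = "\<lambda>x. \<gamma> p + \<epsilon> + g \<bullet> (x - p)"
    have inth: "integrable \<mu> ?h"
      using int by (auto intro!: integrable_inner_right simp: inner_diff_right)
    have aeh: "AE x in \<mu>. 0 \<le> ?h x"
      using aeF by eventually_elim (use g nn FS in force)
    have "(\<integral>\<^sup>+ x. ennreal (\<gamma> x) \<partial>\<mu>) \<le> (\<integral>\<^sup>+ x. ennreal (?h x) \<partial>\<mu>)"
      using aeF by (intro nn_integral_mono_AE) (auto elim!: eventually_mono intro!: ennreal_leI g)
    also have "\<dots> = ennreal (\<integral>x. ?h x \<partial>\<mu>)"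
      by (rule nn_integral_eq_integral[OF inth aeh])
    also have "(\<integral>x. ?h x \<partial>\<mu>) = \<gamma> p + \<epsilon>"
    proof -
      have "(\<integral>x. ?h x \<partial>\<mu>) = (\<integral>x. (\<gamma> p + \<epsilon> - g \<bullet> p) + g \<bullet> x \<partial>\<mu>)"
        by (simp add: inner_diff_right algebra_simps)
      also have "\<dots> = (\<gamma> p + \<epsilon> - g \<bullet> p) + g \<bullet> p"
        using int mean by (simp add: integrable_inner_right P.prob_space)
      finally show ?thesis by simp
    qed
    finally show "(\<integral>\<^sup>+ x. ennreal (\<gamma> x) \<partial>\<mu>) \<le> ennreal (\<gamma> p) + ennreal \<epsilon>"
      using ep nn ps by (simp add: ennreal_plus)
  qed
qed

lemma bellman_ineq:
  assumes "stochastic_matrix M" "greedy_selection r G" "0 \<le> \<delta>" "\<delta> \<le> 1"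
    and dJ: "\<forall>p \<in> Jset r. 0 \<le> greedy_payoff M r \<delta> G p - \<delta> * greedy_payoff M r \<delta> G (phi M p)"
    and qs: "q \<in> prob_simplex"
  shows "(1 - \<delta>) * indicator (Iset r) q + \<delta> * greedy_payoff M r \<delta> G (phi M q) \<le> greedy_payoff M r \<delta> G q"
proof (cases "q \<in> Iset r")
  case True
  then show ?thesis using greedy_I[OF assms(1-4) True] by simp
next
  case False
  then have "q \<in> Jset r" using qs by (simp add: Jset_def)
  then show ?thesis using dJ False by auto
qed

lemma main_bound:
  assumes st: "stochastic_matrix M" and gs: "greedy_selection r G" and d0: "0 \<le> \<delta>" and d1: "\<delta> \<le> 1"
    and conc: "concave_on prob_simplex (greedy_payoff M r \<delta> G)"
    and dJ: "\<forall>p \<in> Jset r. 0 \<le> greedy_payoff M r \<delta> G p - \<delta> * greedy_payoff M r \<delta> G (phi M p)"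
    and sig: "strategy M p1 \<sigma>" and p1: "p1 \<in> prob_simplex"
  shows "set h \<subseteq> prob_simplex \<Longrightarrow> stage_payoff r \<delta> \<sigma> n h \<le> ennreal (greedy_payoff M r \<delta> G (belief M p1 h))"
proof (induction n arbitrary: h)
  case 0
  then show ?case by simp
next
  case (Suc n)
  let ?g = "greedy_payoff M r \<delta> G"
  have nn: "\<forall>x\<in>prob_simplex. 0 \<le> ?g x" by (simp add: greedy_payoff_def)
  have bs: "belief M p1 h \<in> prob_simplex" using belief_simplex[OF st p1 Suc.prems] .
  have sp: "\<sigma> h \<in> splittings (belief M p1 h)" using sig Suc.prems by (auto simp: strategy_def)
  then have ae: "AE q in \<sigma> h. q \<in> prob_simplex" by (auto simp: splittings_def)
  have "stage_payoff r \<delta> \<sigma> (Suc n) h \<le> (\<integral>\<^sup>+ q. ennreal (?g q) \<partial>\<sigma> h)"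
    unfolding stage_payoff.simps
  proof (rule nn_integral_mono_AE)
    show "AE q in \<sigma> h. ennreal ((1 - \<delta>) * indicator (Iset r) q) + ennreal \<delta> * stage_payoff r \<delta> \<sigma> n (h @ [q]) \<le> ennreal (?g q)"
      using ae
    proof eventually_elim
      case (elim q)
      have "stage_payoff r \<delta> \<sigma> n (h @ [q]) \<le> ennreal (?g (belief M p1 (h @ [q])))"
        using Suc elim by auto
      also have "belief M p1 (h @ [q]) = phi M q" by (simp add: belief_def)
      finally have "ennreal \<delta> * stage_payoff r \<delta> \<sigma> n (h @ [q]) \<le> ennreal \<delta> * ennreal (?g (phi M q))"
        by (rule mult_left_mono) simp
      then have "ennreal ((1 - \<delta>) * indicator (Iset r) q) + ennreal \<delta> * stage_payoff r \<delta> \<sigma> n (h @ [q])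
          \<le> ennreal ((1 - \<delta>) * indicator (Iset r) q) + ennreal \<delta> * ennreal (?g (phi M q))"
        by (rule add_left_mono)
      also have "\<dots> = ennreal ((1 - \<delta>) * indicator (Iset r) q + \<delta> * ?g (phi M q))"
        using d0 d1 by (simp add: ennreal_plus ennreal_mult greedy_payoff_def)
      also have "\<dots> \<le> ennreal (?g q)"
        by (rule ennreal_leI, rule bellman_ineq[OF st gs d0 d1 dJ elim])
      finally show ?case .
    qed
  qed
  also have "\<dots> \<le> ennreal (?g (belief M p1 h))"
    by (rule jensen_simplex[OF conc nn sp bs])
  finally show ?case .
qed

theorem lemma6:
  fixes M :: "real^'n^'n::finite" and r :: "real^'n" and \<delta> :: real
    and G :: "real^'n \<Rightarrow> (real^'n) measure"
  assumes "stochastic_matrix M" and "irreducible_matrix M"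
    and "0 \<le> \<delta>" and "\<delta> < 1"
    and "greedy_selection r G"
    and "concave_on prob_simplex (greedy_payoff M r \<delta> G)"
    and "\<forall>p \<in> Jset r. 0 \<le> greedy_payoff M r \<delta> G p - \<delta> * greedy_payoff M r \<delta> G (phi M p)"
  shows "\<forall>p1 \<in> prob_simplex. optimal M r \<delta> p1 (greedy_strategy M G p1)"
proof
  fix p1 :: "real^'n" assume p1: "p1 \<in> prob_simplex"
  have d1: "\<delta> \<le> 1" using assms by simp
  have gst: "strategy M p1 (greedy_strategy M G p1)"
    by (rule greedy_is_strategy[OF assms(1,5) p1])
  have fin: "payoff r \<delta> (greedy_strategy M G p1) < \<top>"
    using payoff_bound[OF gst assms(3) d1, of r] ennreal_one_less_top by (rule le_less_trans)
  have pe: "payoff r \<delta> (greedy_strategy M G p1) = ennreal (greedy_payoff M r \<delta> G p1)"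
    unfolding greedy_payoff_def using fin by (rule ennreal_enn2real[symmetric])
  have "value_fn M r \<delta> p1 \<le> payoff r \<delta> (greedy_strategy M G p1)"
    unfolding value_fn_def
  proof (rule SUP_least)
    fix \<sigma> assume "\<sigma> \<in> {\<sigma>. strategy M p1 \<sigma>}"
    then have sig: "strategy M p1 \<sigma>" by simp
    show "payoff r \<delta> \<sigma> \<le> payoff r \<delta> (greedy_strategy M G p1)"
      unfolding pe unfolding payoff_def
    proof (rule SUP_least)
      fix n
      show "stage_payoff r \<delta> \<sigma> n [] \<le> ennreal (greedy_payoff M r \<delta> G p1)"
        using main_bound[OF assms(1,5,3) d1 assms(6,7) sig p1, of "[]" n]
        by (simp add: belief_def)
    qed
  qed
  moreover have "payoff r \<delta> (greedy_strategy M G p1) \<le> value_fn M r \<delta> p1"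
    unfolding value_fn_def using gst by (intro SUP_upper) simp
  ultimately show "optimal M r \<delta> p1 (greedy_strategy M G p1)"
    using gst by (simp add: optimal_def)
qed

end
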